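(* Let $H\in(0,1)$ and let $B^H=\{B^H(t):t\in[0,1]\}$ be a fractional Brownian motion with Hurst index $H$. Fix $\delta\in(0,H)$ and set $\ell_k=2^{-(H-\delta)k}$. For $\nu>0$ let $K(\nu)=\sup\{n\ge 1: 4\sqrt{n}>\nu\cdot 2^{\delta n}\}$. Then for any constants $\nu,\nu^*>0$, with $\rho=2(\nu+\nu^* )$, for all $k>K(\nu)$, $$\mathbb{P}\bigl(\|B^H_k-B^H_{k-1}\|_\infty\ge \rho\ell_k\bigr)=\mathbb{P}\Bigl(\max_{0\le j\le 2^{k-1}-1}|a^k_j-b^k_j|\ge \rho\ell_k\Bigr)\le 2\exp\bigl\{-(\nu^* )^2\cdot 2^{2k\delta-2}\bigr\}.$$
   Context: A fractional Brownian motion with Hurst index $H$ is a centered Gaussian process with $B^H(0)=0$ and covariance $\mathbb{E}[B^H(s)B^H(t)]=\tfrac12(|s|^{2H}+|t|^{2H}-|s-t|^{2H})$, taken with continuous sample paths. For $n\ge0$ let $t^n_i=i/2^n$, $i=0,\dots,2^n$, and $D_n=\{t^n_0,\dots,t^n_{2^n}\}$. $B^H_n$ denotes the continuous function on $[0,1]$ obtained by linear interpolation of the values $B^H(t^n_i)$, $i=0,\dots,2^n$ (the dyadic discretization of level $n$); $B^H_{-1}\equiv 0$. For $k\ge1$ and $j=0,\dots,2^{k-1}-1$: $a^k_j=B^H(t^k_{2j+1})$ and $b^k_j=\tfrac12\bigl(B^H(t^{k-1}_j)+B^H(t^{k-1}_{j+1})\bigr)$. $\|u\|_\infty=\sup_{t\in[0,1]}|u(t)|$.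 *)

theory Defs
  imports "HOL-Probability.Probability"
begin

definition fbm_cov :: "real \<Rightarrow> real \<Rightarrow> real \<Rightarrow> real" where
  "fbm_cov H s t = (\<bar>s\<bar> powr (2*H) + \<bar>t\<bar> powr (2*H) - \<bar>s - t\<bar> powr (2*H)) / 2"

definition centered_gaussian :: "'a measure \<Rightarrow> ('a \<Rightarrow> real) \<Rightarrow> real \<Rightarrow> bool" where
  "centered_gaussian M Y v \<longleftrightarrow>
     Y \<in> borel_measurable M \<and>
     ((v = 0 \<and> (AE x in M. Y x = 0)) \<or>
      (v > 0 \<and> distributed M lborel Y (normal_density 0 (sqrt v))))"

definition is_fbm :: "'a measure \<Rightarrow> real \<Rightarrow> (real \<Rightarrow> 'a \<Rightarrow> real) \<Rightarrow> bool" where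
  "is_fbm M H X \<longleftrightarrow>
     prob_space M \<and>
     (\<forall>t\<in>{0..1}. X t \<in> borel_measurable M) \<and>
     (\<forall>(n::nat) (t::nat \<Rightarrow> real) (c::nat \<Rightarrow> real). (\<forall>i<n. t i \<in> {0..1}) \<longrightarrow>
        centered_gaussian M (\<lambda>\<omega>. \<Sum>i<n. c i * X (t i) \<omega>)
          (\<Sum>i<n. \<Sum>j<n. c i * c j * fbm_cov H (t i) (t j))) \<and>
     (\<forall>\<omega>\<in>space M. X 0 \<omega> = 0) \<and>
     (\<forall>\<omega>\<in>space M. continuous_on {0..1} (\<lambda>t. X t \<omega>))"

text \<open>Dyadic discretization of level n: linear interpolation of the values at i/2^n.\<close>
definition dyadic_interp :: "(real \<Rightarrow> 'a \<Rightarrow> real) \<Rightarrow> nat \<Rightarrow> 'a \<Rightarrow> real \<Rightarrow> real" where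
  "dyadic_interp X n \<omega> t =
     (let s = t * 2 ^ n; i = min (nat \<lfloor>s\<rfloor>) (2 ^ n - 1)
      in X (real i / 2 ^ n) \<omega> + (s - real i) * (X (real (i + 1) / 2 ^ n) \<omega> - X (real i / 2 ^ n) \<omega>))"

definition sup_norm01 :: "(real \<Rightarrow> real) \<Rightarrow> real" where
  "sup_norm01 u = (SUP t\<in>{0..1}. \<bar>u t\<bar>)"

definition K_nu :: "real \<Rightarrow> real \<Rightarrow> nat" where
  "K_nu \<delta> \<nu> = Sup {n::nat. n \<ge> 1 \<and> 4 * sqrt (real n) > \<nu> * 2 powr (\<delta> * real n)}"

end

theory Submission
  imports Defs
begin

lemma mgf_ident:
  assumes "0 < \<sigma>"
  shows "normal_density 0 \<sigma> y * exp (a * y) = exp (a^2 * \<sigma>^2 / 2) * normal_density (a * \<sigma>^2) \<sigma> y"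
proof -
  have "-(y - 0)\<^sup>2 / (2 * \<sigma>\<^sup>2) + a * y = a^2 * \<sigma>^2 / 2 + (-(y - a * \<sigma>^2)\<^sup>2 / (2 * \<sigma>\<^sup>2))"
    using assms by (simp add: field_simps power2_eq_square)
  then show ?thesis unfolding normal_density_def
    by (simp add: exp_add[symmetric] mult_ac)
qed

lemma gauss_tail:
  assumes P: "prob_space M" and G: "centered_gaussian M Y v" and vw: "v \<le> w" and w: "0 < w" and x: "0 < x"
  shows "measure M {\<omega>\<in>space M. x \<le> \<bar>Y \<omega>\<bar>} \<le> 2 * exp (-(x^2)/(2*w))"
proof -
  interpret prob_space M by (rule P)
  have Ym[measurable]: "Y \<in> borel_measurable M" using G unfolding centered_gaussian_def by auto
  have S: "{\<omega>\<in>space M. x \<le> \<bar>Y \<omega>\<bar>} \<in> sets M" by measurable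
  consider "v = 0" "AE \<omega> in M. Y \<omega> = 0" | "v > 0" "distributed M lborel Y (normal_density 0 (sqrt v))"
    using G unfolding centered_gaussian_def by auto
  then show ?thesis
  proof cases
    case 1
    have "AE \<omega> in M. \<omega> \<notin> {\<omega>\<in>space M. x \<le> \<bar>Y \<omega>\<bar>}" using 1(2) by (rule AE_mp) (use x in \<open>auto intro!: AE_I2\<close>)
    then have "measure M {\<omega>\<in>space M. x \<le> \<bar>Y \<omega>\<bar>} = 0" using S
      by (simp add: prob_eq_0)
    then show ?thesis by simp
  next
    case 2
    define \<sigma> where "\<sigma> = sqrt v"
    have s: "0 < \<sigma>" using 2 by (simp add: \<sigma>_def)
    have D: "distributed M lborel Y (normal_density 0 \<sigma>)" using 2 by (simp add: \<sigma>_def)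
    define a where "a = x / v"
    have a: "0 < a" using x 2 by (simp add: a_def)
    define g where "g = (\<lambda>y. exp (a * y) + exp (-a * y))"
    have gm[measurable]: "g \<in> borel_measurable lborel" unfolding g_def by measurable
    have fg: "normal_density 0 \<sigma> y * g y = exp (a^2 * \<sigma>^2 / 2) * normal_density (a * \<sigma>^2) \<sigma> y
       + exp ((-a)^2 * \<sigma>^2 / 2) * normal_density ((-a) * \<sigma>^2) \<sigma> y" for y
      unfolding g_def distrib_left mgf_ident[OF s, symmetric] by simp
    have int1: "integrable lborel (\<lambda>y. normal_density 0 \<sigma> y * g y)"
      unfolding fg by (intro Bochner_Integration.integrable_add integrable_mult_right integrable_normal_density) (use s in auto)
    have intM: "integrable M (\<lambda>\<omega>. g (Y \<omega>))"
      using distributed_integrable[OF D gm] int1 by simp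
    have E: "(\<integral>\<omega>. g (Y \<omega>) \<partial>M) = 2 * exp (a^2 * v / 2)"
    proof -
      have "(\<integral>\<omega>. g (Y \<omega>) \<partial>M) = (\<integral>y. normal_density 0 \<sigma> y * g y \<partial>lborel)"
        using distributed_integral[OF D gm] by simp
      also have "\<dots> = 2 * exp (a^2 * v / 2)" unfolding fg using 2
        by (simp add: \<sigma>_def)
      finally show ?thesis .
    qed
    have "measure M {\<omega>\<in>space M. x \<le> \<bar>Y \<omega>\<bar>} \<le> measure M {\<omega>\<in>space M. exp (a * x) \<le> g (Y \<omega>)}"
    proof (rule finite_measure_mono)
      show "{\<omega>\<in>space M. x \<le> \<bar>Y \<omega>\<bar>} \<subseteq> {\<omega>\<in>space M. exp (a * x) \<le> g (Y \<omega>)}"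
      proof safe
        fix \<omega> assume "\<omega> \<in> space M" "x \<le> \<bar>Y \<omega>\<bar>"
        then have "exp (a * x) \<le> exp (a * \<bar>Y \<omega>\<bar>)" using a by simp
        also have "\<dots> \<le> g (Y \<omega>)" unfolding g_def by (cases "Y \<omega> \<ge> 0") auto
        finally show "exp (a * x) \<le> g (Y \<omega>)" .
      qed
    qed measurable
    also have "\<dots> \<le> (\<integral>\<omega>. g (Y \<omega>) \<partial>M) / exp (a * x)"
      by (rule integral_Markov_inequality_measure[OF intM]) (auto simp: g_def)
    also have "\<dots> = 2 * exp (- (x ^ 2) / (2 * v))"
    proof -
      have "a^2 * v / 2 - a * x = - (x ^ 2) / (2 * v)" using 2 by (simp add: a_def field_simps power2_eq_square)
      then show ?thesis by (metis E exp_diff minus_divide_left times_divide_eq_right)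
    qed
    also have "\<dots> \<le> 2 * exp (-(x^2)/(2*w))"
      using 2 vw x by (simp add: frac_le divide_simps)
    finally show ?thesis .
  qed
qed


lemma floor_half: assumes "0 \<le> (s::real)" shows "nat \<lfloor>s / 2\<rfloor> = nat \<lfloor>s\<rfloor> div 2"
proof -
  define a where "a = \<lfloor>s\<rfloor>"
  have a0: "0 \<le> a" using assms by (simp add: a_def)
  have "a = 2 * (a div 2) + a mod 2" by simp
  moreover have "a mod 2 \<ge> 0" "a mod 2 \<le> 1" by auto
  moreover have "of_int a \<le> s" "s < of_int a + 1" unfolding a_def by linarith+
  ultimately have "of_int (a div 2) \<le> s / 2" "s / 2 < of_int (a div 2) + 1" by linarith+
  then have "\<lfloor>s / 2\<rfloor> = a div 2" by (simp add: floor_eq_iff)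
  then show ?thesis using a0 by (simp add: a_def nat_div_distrib)
qed

lemma idx_facts:
  fixes N :: nat and t s :: real
  assumes "0 \<le> t" "t \<le> 1" "s = t * 2 ^ N"
  shows "real (min (nat \<lfloor>s\<rfloor>) (2 ^ N - 1)) \<le> s" "s \<le> real (min (nat \<lfloor>s\<rfloor>) (2 ^ N - 1)) + 1"
proof -
  have s0: "0 \<le> s" "s \<le> 2^N" using assms by (auto simp: mult_le_cancel_right1)
  have p: "(1::nat) \<le> 2 ^ N" by simp
  have "real (min (nat \<lfloor>s\<rfloor>) (2 ^ N - 1)) \<le> s \<and> s \<le> real (min (nat \<lfloor>s\<rfloor>) (2 ^ N - 1)) + 1"
  proof (cases "nat \<lfloor>s\<rfloor> \<le> 2 ^ N - 1")
    case True
    then have "real (min (nat \<lfloor>s\<rfloor>) (2 ^ N - 1)) = of_int \<lfloor>s\<rfloor>" using s0 by simp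
    then show ?thesis by linarith
  next
    case False
    have A: "2 ^ N \<le> nat \<lfloor>s\<rfloor>" using False p by linarith
    have B: "\<lfloor>s\<rfloor> \<ge> 0" using s0 by simp
    have "(2::int) ^ N \<le> \<lfloor>s\<rfloor>" using A B le_nat_iff by fastforce
    then have "s \<ge> 2 ^ N" by (simp add: le_floor_iff)
    then have "s = 2 ^ N" using s0 by simp
    moreover have "real (min (nat \<lfloor>s\<rfloor>) (2 ^ N - 1)) = 2 ^ N - 1" using False p by (simp add: of_nat_diff)
    ultimately show ?thesis by simp
  qed
  then show "real (min (nat \<lfloor>s\<rfloor>) (2 ^ N - 1)) \<le> s" "s \<le> real (min (nat \<lfloor>s\<rfloor>) (2 ^ N - 1)) + 1" by auto
qed

lemma idx_half:
  fixes n :: nat and t :: real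
  assumes "0 \<le> t"
  shows "min (nat \<lfloor>t * 2 ^ n\<rfloor>) (2 ^ n - 1) = min (nat \<lfloor>t * 2 ^ Suc n\<rfloor>) (2 ^ Suc n - 1) div 2"
proof -
  have e: "t * 2 ^ n = (t * 2 ^ Suc n) / 2" by simp
  have f: "nat \<lfloor>t * 2 ^ n\<rfloor> = nat \<lfloor>t * 2 ^ Suc n\<rfloor> div 2" unfolding e
    by (rule floor_half) (use assms in simp)
  have g: "((2::nat) ^ Suc n - 1) div 2 = 2 ^ n - 1" by (induct n) auto
  have h: "min (a div 2) (b div 2) = min a b div 2" for a b :: nat
    by (cases "a \<le> b") (auto simp: min_def div_le_mono)
  show ?thesis unfolding f g[symmetric] h ..
qed
lemma diff_repr:
  fixes t :: real and n :: nat
  assumes "0 \<le> t" "t \<le> 1"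
  shows "\<exists>m \<theta>. m < 2^n \<and> 0 \<le> \<theta> \<and> \<theta> \<le> 1 \<and> dyadic_interp X (Suc n) \<omega> t - dyadic_interp X n \<omega> t
     = \<theta> * (X (real (2*m+1) / 2^Suc n) \<omega> - (X (real m / 2^n) \<omega> + X (real (m+1) / 2^n) \<omega>) / 2)"
proof -
  define s where "s = t * 2^Suc n"
  define i where "i = min (nat \<lfloor>s\<rfloor>) (2^Suc n - 1)"
  define m where "m = i div 2"
  have i1: "real i \<le> s" "s \<le> real i + 1" using idx_facts[OF assms s_def] by (simp_all add: i_def)
  have pos: "0 < (2::nat)^n" by simp
  have "i \<le> 2 * 2^n - 1" unfolding i_def by simp
  then have i2: "i < 2 * 2^n" using pos by linarith
  have im: "min (nat \<lfloor>t * 2 ^ n\<rfloor>) (2 ^ n - 1) = m" using idx_half[OF assms(1), of n] by (simp add: m_def i_def s_def)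
  have mlt: "m < 2^n" using i2 unfolding m_def by (simp add: less_mult_imp_div_less mult.commute)
  have f: "dyadic_interp X (Suc n) \<omega> t = X (real i / 2^Suc n) \<omega> + (s - real i) * (X (real (i+1)/2^Suc n) \<omega> - X (real i / 2^Suc n) \<omega>)"
    unfolding dyadic_interp_def Let_def s_def i_def by simp
  have g: "dyadic_interp X n \<omega> t = X (real m / 2^n) \<omega> + (t*2^n - real m) * (X (real (m+1)/2^n) \<omega> - X (real m/2^n) \<omega>)"
    unfolding dyadic_interp_def Let_def im by simp
  have ts: "t*2^n = s/2" by (simp add: s_def)
  define A where "A = X (real m / 2^n) \<omega>"
  define B where "B = X (real (2*m+1) / 2^Suc n) \<omega>"
  define C where "C = X (real (m+1) / 2^n) \<omega>"
  have e1: "real (2*m) / 2^Suc n = real m / 2^n" by simp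
  have e2: "real (2*m+2) / 2^Suc n = real (m+1) / 2^n" by (simp add: field_simps)
  consider (ev) "i = 2*m" | (od) "i = 2*m+1" unfolding m_def by linarith
  then show ?thesis
  proof cases
    case ev
    have fA: "X (real i / 2^Suc n) \<omega> = A" using ev e1 A_def by simp
    have fB: "X (real (i+1) / 2^Suc n) \<omega> = B" using ev B_def by simp
    have gA: "X (real m / 2^n) \<omega> = A" "X (real (m+1) / 2^n) \<omega> = C" using A_def C_def by simp_all
    have q: "s/2 - real m = (s - real i)/2" using ev by simp
    have D: "dyadic_interp X (Suc n) \<omega> t - dyadic_interp X n \<omega> t = (s - real i) * (B - (A + C) / 2)"
      unfolding f g ts fA fB gA q by (simp add: field_simps)
    show ?thesis
      by (rule exI[of _ m], rule exI[of _ "s - real i"]) (use mlt i1 ev D A_def B_def C_def in auto)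
  next
    case od
    have fA: "X (real i / 2^Suc n) \<omega> = B" using od B_def by simp
    have fB: "X (real (i+1) / 2^Suc n) \<omega> = C" using od e2 C_def by simp
    have gA: "X (real m / 2^n) \<omega> = A" "X (real (m+1) / 2^n) \<omega> = C" using A_def C_def by simp_all
    have q: "s/2 - real m = (1 + (s - real i))/2" using od by simp
    have D: "dyadic_interp X (Suc n) \<omega> t - dyadic_interp X n \<omega> t = (1 - (s - real i)) * (B - (A + C) / 2)"
      unfolding f g ts fA fB gA q by (simp add: field_simps)
    show ?thesis
      by (rule exI[of _ m], rule exI[of _ "1 - (s - real i)"]) (use mlt i1 od D A_def B_def C_def in auto)
  qed
qed

lemma diff_at_node:
  fixes n j :: nat
  assumes "j < 2^n"
  shows "dyadic_interp X (Suc n) \<omega> (real (2*j+1) / 2^Suc n) - dyadic_interp X n \<omega> (real (2*j+1) / 2^Suc n)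
     = X (real (2*j+1) / 2^Suc n) \<omega> - (X (real j / 2^n) \<omega> + X (real (j+1) / 2^n) \<omega>) / 2"
proof -
  define t where "t = real (2*j+1) / 2^Suc n"
  have s1: "t * 2^Suc n = real (2*j+1)" by (simp add: t_def)
  have le: "2*j+1 \<le> 2^Suc n - 1" using assms by simp
  have i1: "min (nat \<lfloor>real (2*j+1)\<rfloor>) (2^Suc n - 1) = 2*j+1" unfolding floor_of_nat nat_int
    using le by (rule min_absorb1)
  have s2: "t * 2^n = real j + 1/2" by (simp add: t_def field_simps)
  have fl: "\<lfloor>t * 2^n\<rfloor> = int j" unfolding s2 by (simp add: floor_eq_iff)
  have i2: "min (nat \<lfloor>t * 2^n\<rfloor>) (2^n - 1) = j" unfolding fl using assms by (simp add: min_def)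
  have "dyadic_interp X (Suc n) \<omega> t = X t \<omega>"
    unfolding dyadic_interp_def Let_def s1 i1 by (simp add: t_def)
  moreover have "dyadic_interp X n \<omega> t = X (real j / 2^n) \<omega> + (1/2) * (X (real (j+1) / 2^n) \<omega> - X (real j / 2^n) \<omega>)"
    unfolding dyadic_interp_def Let_def i2 s2 using assms by (simp add: fl min_absorb1)
  ultimately show ?thesis unfolding t_def by (simp add: algebra_simps)
qed

lemma sup_eq_max:
  fixes n :: nat
  shows "sup_norm01 (\<lambda>t. dyadic_interp X (Suc n) \<omega> t - dyadic_interp X n \<omega> t)
    = (MAX j\<in>{0..<2 ^ n}. \<bar>X (real (2 * j + 1) / 2 ^ Suc n) \<omega> - (X (real j / 2 ^ n) \<omega> + X (real (j + 1) / 2 ^ n) \<omega>) / 2\<bar>)"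
proof -
  define Z where "Z j = \<bar>X (real (2 * j + 1) / 2 ^ Suc n) \<omega> - (X (real j / 2 ^ n) \<omega> + X (real (j + 1) / 2 ^ n) \<omega>) / 2\<bar>" for j
  define D where "D t = \<bar>dyadic_interp X (Suc n) \<omega> t - dyadic_interp X n \<omega> t\<bar>" for t
  define Mx where "Mx = (MAX j\<in>{0..<(2::nat) ^ n}. Z j)"
  have fin: "finite {0..<(2::nat) ^ n}" "{0..<(2::nat) ^ n} \<noteq> {}" by auto
  have Zle: "Z j \<le> Mx" if "j < 2^n" for j
    unfolding Mx_def using fin that by (intro Max_ge) auto
  have Dle: "D t \<le> Mx" if tt: "t \<in> {0..1}" for t
  proof -
    obtain m \<theta> where m: "m < 2^n" "0 \<le> \<theta>" "\<theta> \<le> 1"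
      and e: "dyadic_interp X (Suc n) \<omega> t - dyadic_interp X n \<omega> t
     = \<theta> * (X (real (2*m+1) / 2^Suc n) \<omega> - (X (real m / 2^n) \<omega> + X (real (m+1) / 2^n) \<omega>) / 2)"
      using diff_repr[of t n X \<omega>] tt by auto
    have "D t = \<theta> * Z m" unfolding D_def Z_def e using m by (simp add: abs_mult)
    also have "\<dots> \<le> Z m" using m by (simp add: Z_def mult_left_le_one_le)
    also have "\<dots> \<le> Mx" using Zle m by simp
    finally show ?thesis .
  qed
  have S1: "(SUP t\<in>{0..1}. D t) \<le> Mx" by (rule cSUP_least) (use Dle in auto)
  have "Mx \<in> Z ` {0..<2^n}" unfolding Mx_def using fin by (intro Max_in) auto
  then obtain j where j: "j \<in> {0..<2^n}" "Mx = Z j" by auto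
  have "2*j+1 \<le> (2::nat)^Suc n" using j(1) by simp
  then have "real (2*j+1) \<le> 2^Suc n" by (metis of_nat_le_iff of_nat_numeral of_nat_power)
  then have tj: "real (2*j+1) / 2^Suc n \<in> {0..1}" by simp
  have "Mx = D (real (2*j+1) / 2^Suc n)" unfolding j(2) D_def Z_def using j(1) by (simp only: diff_at_node atLeastLessThan_iff)
  also have "\<dots> \<le> (SUP t\<in>{0..1}. D t)"
    by (rule cSUP_upper[OF tj]) (use Dle in \<open>auto intro!: bdd_aboveI2[where M=Mx]\<close>)
  finally have S2: "Mx \<le> (SUP t\<in>{0..1}. D t)" .
  have L: "sup_norm01 (\<lambda>t. dyadic_interp X (Suc n) \<omega> t - dyadic_interp X n \<omega> t) = (SUP t\<in>{0..1}. D t)"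
    by (simp add: sup_norm01_def D_def)
  have R: "(MAX j\<in>{0..<2 ^ n}. \<bar>X (real (2 * j + 1) / 2 ^ Suc n) \<omega> - (X (real j / 2 ^ n) \<omega> + X (real (j + 1) / 2 ^ n) \<omega>) / 2\<bar>) = Mx"
    by (simp add: Mx_def Z_def)
  show ?thesis unfolding L R using S1 S2 by linarith
qed



lemma var3:
  fixes a b d h H :: real
  assumes "a - b = h" "d - a = h" "0 < h"
  shows "(\<Sum>i<3. \<Sum>j<3. (\<lambda>i::nat. if i = 0 then 1 else -1/2 :: real) i * (\<lambda>i::nat. if i = 0 then 1 else -1/2 :: real) j
      * fbm_cov H ((\<lambda>i::nat. if i = 0 then a else if i = 1 then b else d) i) ((\<lambda>i::nat. if i = 0 then a else if i = 1 then b else d) j))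
     \<le> h powr (2*H)"
proof -
  have e: "\<bar>a - b\<bar> = h" "\<bar>b - a\<bar> = h" "\<bar>a - d\<bar> = h" "\<bar>d - a\<bar> = h" "\<bar>b - d\<bar> = 2*h" "\<bar>d - b\<bar> = 2*h"
    using assms by auto
  have s: "(\<Sum>i<3. f i) = f 0 + f 1 + f (2::nat)" for f :: "nat \<Rightarrow> real"
    by (simp add: numeral_3_eq_3 eval_nat_numeral)
  have "(\<Sum>i<3. \<Sum>j<3. (\<lambda>i::nat. if i = 0 then 1 else -1/2 :: real) i * (\<lambda>i::nat. if i = 0 then 1 else -1/2 :: real) j
      * fbm_cov H ((\<lambda>i::nat. if i = 0 then a else if i = 1 then b else d) i) ((\<lambda>i::nat. if i = 0 then a else if i = 1 then b else d) j))
     = h powr (2*H) - (2*h) powr (2*H) / 4"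
    unfolding s by (simp add: fbm_cov_def e field_simps)
  also have "\<dots> \<le> h powr (2*H)" by simp
  finally show ?thesis .
qed
lemma Z_tail:
  fixes n j :: nat
  assumes fbm: "is_fbm M H X" and j: "j < 2^n" and x: "0 < x"
  shows "measure M {\<omega>\<in>space M. x \<le> \<bar>X (real (2 * j + 1) / 2 ^ Suc n) \<omega> - (X (real j / 2 ^ n) \<omega> + X (real (j + 1) / 2 ^ n) \<omega>) / 2\<bar>}
     \<le> 2 * exp (-(x^2)/(2*((1/2^Suc n) powr (2*H))))"
proof -
  define h :: real where "h = 1/2^Suc n"
  have h0: "0 < h" by (simp add: h_def)
  define a where "a = real (2*j+1) * h"
  define b where "b = real (2*j) * h"
  define d where "d = real (2*j+2) * h"
  define t where "t = (\<lambda>i::nat. if i = 0 then a else if i = 1 then b else d)"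
  define c where "c = (\<lambda>i::nat. if i = 0 then 1 else -1/2 :: real)"
  have ea: "a = real (2 * j + 1) / 2 ^ Suc n" by (simp add: a_def h_def)
  have eb: "b = real j / 2 ^ n" by (simp add: b_def h_def)
  have ed: "d = real (j+1) / 2 ^ n" by (simp add: d_def h_def field_simps)
  have "2*j+2 \<le> (2::nat)^Suc n" using j by simp
  then have dle: "real (2*j+2) \<le> 2^Suc n" by (metis of_nat_le_iff of_nat_numeral of_nat_power)
  have "d \<le> 1" using dle by (simp add: d_def h_def)
  moreover have "a \<le> d" "b \<le> d" unfolding a_def b_def d_def using h0 by (intro mult_right_mono; simp)+
  moreover have "0 \<le> a" "0 \<le> b" using h0 by (simp_all add: a_def b_def)
  ultimately have tin: "\<forall>i<3. t i \<in> {0..1}" unfolding t_def by auto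
  have P: "prob_space M" using fbm by (simp add: is_fbm_def)
  have G: "centered_gaussian M (\<lambda>\<omega>. \<Sum>i<3. c i * X (t i) \<omega>) (\<Sum>i<3. \<Sum>j<3. c i * c j * fbm_cov H (t i) (t j))"
    using fbm tin unfolding is_fbm_def by blast
  have s: "(\<Sum>i<3. f i) = f 0 + f 1 + f (2::nat)" for f :: "nat \<Rightarrow> real"
    by (simp add: numeral_3_eq_3 eval_nat_numeral)
  have fe: "(\<lambda>\<omega>. \<Sum>i<3. c i * X (t i) \<omega>) = (\<lambda>\<omega>. X (real (2 * j + 1) / 2 ^ Suc n) \<omega> - (X (real j / 2 ^ n) \<omega> + X (real (j + 1) / 2 ^ n) \<omega>) / 2)"
    unfolding s ea[symmetric] eb[symmetric] ed[symmetric] by (simp add: c_def t_def fun_eq_iff field_simps)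
  have V: "(\<Sum>i<3. \<Sum>j<3. c i * c j * fbm_cov H (t i) (t j)) \<le> h powr (2*H)"
    unfolding c_def t_def by (rule var3) (auto simp: a_def b_def d_def h0 algebra_simps)
  have hp: "0 < h powr (2*H)" using h0 by simp
  show ?thesis using gauss_tail[OF P G[unfolded fe] V hp x] by (simp add: h_def)
qed
lemma pts:
  fixes n j :: nat
  assumes "j < 2^n"
  shows "real (2 * j + 1) / 2 ^ Suc n \<in> {0..1}" "real j / 2 ^ n \<in> {0..1}" "real (j + 1) / 2 ^ n \<in> {0..1}"
proof -
  have "2*j+1 \<le> (2::nat)^Suc n" "j \<le> (2::nat)^n" "j+1 \<le> (2::nat)^n" using assms by simp_all
  then have "real (2*j+1) \<le> 2^Suc n" "real j \<le> 2^n" "real (j+1) \<le> 2^n"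
    by (metis of_nat_le_iff of_nat_numeral of_nat_power)+
  then show "real (2 * j + 1) / 2 ^ Suc n \<in> {0..1}" "real j / 2 ^ n \<in> {0..1}" "real (j + 1) / 2 ^ n \<in> {0..1}"
    by simp_all
qed

lemma max_tail:
  fixes n :: nat
  assumes fbm: "is_fbm M H X" and x: "0 < x"
  shows "measure M {\<omega>\<in>space M. x \<le> (MAX j\<in>{0..<2 ^ n}. \<bar>X (real (2 * j + 1) / 2 ^ Suc n) \<omega> - (X (real j / 2 ^ n) \<omega> + X (real (j + 1) / 2 ^ n) \<omega>) / 2\<bar>)}
     \<le> 2^n * (2 * exp (-(x^2)/(2*((1/2^Suc n) powr (2*H)))))"
proof -
  interpret prob_space M using fbm by (simp add: is_fbm_def)
  have Xm: "X t \<in> borel_measurable M" if "t \<in> {0..1}" for t using fbm that by (simp add: is_fbm_def)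
  define Z where "Z j \<omega> = \<bar>X (real (2 * j + 1) / 2 ^ Suc n) \<omega> - (X (real j / 2 ^ n) \<omega> + X (real (j + 1) / 2 ^ n) \<omega>) / 2\<bar>" for j \<omega>
  define A where "A j = {\<omega>\<in>space M. x \<le> Z j \<omega>}" for j
  have fin: "finite {0..<(2::nat) ^ n}" "{0..<(2::nat) ^ n} \<noteq> {}" by auto
  have eq: "{\<omega>\<in>space M. x \<le> (MAX j\<in>{0..<2 ^ n}. Z j \<omega>)} = (\<Union>j\<in>{0..<2^n}. A j)"
    unfolding A_def using fin by (auto simp: Max_ge_iff)
  have Am: "A j \<in> sets M" if "j \<in> {0..<2^n}" for j
  proof -
    have j: "j < 2^n" using that by simp
    note m = Xm[OF pts(1)[OF j]] Xm[OF pts(2)[OF j]] Xm[OF pts(3)[OF j]]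
    have "Z j \<in> borel_measurable M" unfolding Z_def using m by measurable
    then show ?thesis unfolding A_def by measurable
  qed
  have "measure M {\<omega>\<in>space M. x \<le> (MAX j\<in>{0..<2 ^ n}. Z j \<omega>)} \<le> (\<Sum>j\<in>{0..<2^n}. measure M (A j))"
    unfolding eq by (rule finite_measure_subadditive_finite) (use fin Am in auto)
  also have "\<dots> \<le> (\<Sum>j\<in>{0..<(2::nat)^n}. 2 * exp (-(x^2)/(2*((1/2^Suc n) powr (2*H)))))"
    by (rule sum_mono) (use Z_tail[OF fbm _ x] in \<open>auto simp: A_def Z_def\<close>)
  also have "\<dots> = 2^n * (2 * exp (-(x^2)/(2*((1/2^Suc n) powr (2*H)))))" by simp
  finally show ?thesis unfolding Z_def .
qed


lemma K_bound:
  assumes d: "0 < \<delta>" and nu: "0 < \<nu>" and k: "k > K_nu \<delta> \<nu>"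
  shows "1 \<le> k" "4 * sqrt (real k) \<le> \<nu> * 2 powr (\<delta> * real k)"
proof -
  define S where "S = {n::nat. n \<ge> 1 \<and> 4 * sqrt (real n) > \<nu> * 2 powr (\<delta> * real n)}"
  define c where "c = \<delta> * ln 2 / 2"
  have c: "0 < c" using d by (simp add: c_def)
  have nS: "n \<notin> S" if n: "\<nu> * c^2 * real n \<ge> 4" for n
  proof
    assume "n \<in> S"
    then have n1: "n \<ge> 1" and lt: "4 * sqrt (real n) > \<nu> * 2 powr (\<delta> * real n)" by (auto simp: S_def)
    have "2 powr (\<delta> * real n) = exp (c * real n) ^ 2"
      by (simp add: powr_def c_def exp_of_nat_mult[symmetric] power2_eq_square exp_add[symmetric] algebra_simps)
    also have "\<dots> \<ge> (c * real n) ^ 2"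
      using c by (intro power_mono) (auto intro: order.trans[OF _ exp_ge_add_one_self])
    finally have "\<nu> * 2 powr (\<delta> * real n) \<ge> \<nu> * (c * real n) ^ 2" using nu by simp
    moreover have "\<nu> * (c * real n) ^ 2 = (\<nu> * c^2 * real n) * real n" by (simp add: power2_eq_square)
    moreover have "(\<nu> * c^2 * real n) * real n \<ge> 4 * real n" using n by (intro mult_right_mono) auto
    moreover have "sqrt (real n) \<le> real n" using n1 by (simp add: real_sqrt_le_iff' power2_eq_square)
    ultimately show False using lt by linarith
  qed
  have bdd: "bdd_above S"
  proof (rule bdd_aboveI)
    fix n assume "n \<in> S"
    then have "\<nu> * c^2 * real n < 4" using nS by force
    then have "real n < 4 / (\<nu> * c^2)" using nu c by (simp add: field_simps)
    then show "n \<le> nat \<lceil>4 / (\<nu> * c^2)\<rceil>" by linarith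
  qed
  have K: "K_nu \<delta> \<nu> = Sup S" by (simp add: K_nu_def S_def)
  show "1 \<le> k" using k by simp
  have "k \<notin> S"
  proof
    assume "k \<in> S"
    then have "k \<le> Sup S" using bdd by (rule cSup_upper)
    then show False using k K by simp
  qed
  then show "4 * sqrt (real k) \<le> \<nu> * 2 powr (\<delta> * real k)" using \<open>1 \<le> k\<close> by (auto simp: S_def)
qed

lemma final_arith:
  fixes n :: nat and H \<delta> \<nu> \<nu>s :: real
  assumes nu: "0 < \<nu>" "0 < \<nu>s" and d: "0 < \<delta>"
    and K: "4 * sqrt (real (Suc n)) \<le> \<nu> * 2 powr (\<delta> * real (Suc n))"
    and x: "x = 2 * (\<nu> + \<nu>s) * 2 powr (-(H - \<delta>) * real (Suc n))"
  shows "2^n * (2 * exp (-(x^2)/(2*((1/2^Suc n) powr (2*H))))) \<le> 2 * exp (-(\<nu>s ^ 2) * 2 powr (2 * real (Suc n) * \<delta> - 2))"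
proof -
  define k where "k = real (Suc n)"
  define E where "E = 2 powr (2 * \<delta> * k)"
  have a: "(1/2^Suc n) powr (2*H) = 2 powr (-(2*H*k))"
  proof -
    have "2 powr k = 2^Suc n" unfolding k_def by (rule powr_realpow) simp
    then have "(1::real)/2^Suc n = 2 powr (-k)" by (simp add: powr_minus_divide)
    then show ?thesis by (simp add: powr_powr mult_ac)
  qed
  have b: "x^2 = 4 * (\<nu> + \<nu>s)^2 * 2 powr (-(2*(H-\<delta>)*k))"
    unfolding x k_def by (simp add: power2_eq_square powr_add[symmetric] algebra_simps)
  have r: "x^2/(2*((1/2^Suc n) powr (2*H))) = 2 * (\<nu> + \<nu>s)^2 * E"
  proof -
    have "x^2/(2*((1/2^Suc n) powr (2*H))) = 2 * (\<nu> + \<nu>s)^2 * (2 powr (-(2*(H-\<delta>)*k)) / 2 powr (-(2*H*k)))"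
      unfolding a b by simp
    also have "2 powr (-(2*(H-\<delta>)*k)) / 2 powr (-(2*H*k)) = E"
      unfolding E_def powr_diff[symmetric] by (simp add: algebra_simps)
    finally show ?thesis .
  qed
  have e4: "2 powr (2 * real (Suc n) * \<delta> - 2) = E / 4"
    unfolding E_def k_def by (simp add: powr_diff mult_ac)
  have E16: "\<nu>^2 * E \<ge> 16 * k"
  proof -
    have "(4 * sqrt k)^2 \<le> (\<nu> * 2 powr (\<delta> * k))^2"
      using K unfolding k_def by (intro power_mono) auto
    moreover have "(\<nu> * 2 powr (\<delta> * k))^2 = \<nu>^2 * E"
      unfolding E_def by (simp add: power2_eq_square powr_add[symmetric] algebra_simps)
    moreover have "(4 * sqrt k)^2 = 16 * k" by (simp add: k_def power2_eq_square)
    ultimately show ?thesis by simp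
  qed
  have E0: "0 \<le> E" by (simp add: E_def)
  have sq: "(\<nu> + \<nu>s)^2 \<ge> \<nu>^2 + \<nu>s^2" using nu by (simp add: power2_eq_square algebra_simps)
  have "2 * (\<nu> + \<nu>s)^2 * E \<ge> 2 * (\<nu>^2 + \<nu>s^2) * E" using sq E0 by (intro mult_right_mono) auto
  then have ge: "2 * (\<nu> + \<nu>s)^2 * E \<ge> real n + \<nu>s^2 * E / 4"
  proof -
    have t1: "\<nu>s^2 * E \<ge> 0" using E0 by simp
    have t2: "2 * (\<nu>^2 + \<nu>s^2) * E = 2*(\<nu>^2*E) + 2*(\<nu>s^2*E)" by (simp add: algebra_simps)
    have t3: "k = real n + 1" by (simp add: k_def)
    show ?thesis using \<open>2 * (\<nu> + \<nu>s)^2 * E \<ge> 2 * (\<nu>^2 + \<nu>s^2) * E\<close> t1 t2 t3 E16 by linarith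
  qed
  have p2: "(2::real)^n \<le> exp (real n)"
  proof -
    have "(2::real) \<le> exp 1" using exp_ge_add_one_self[of 1] by simp
    then have "(2::real)^n \<le> exp 1 ^ n" by (intro power_mono) auto
    then show ?thesis by (simp add: exp_of_nat_mult[symmetric])
  qed
  have "2^n * (2 * exp (-(x^2)/(2*((1/2^Suc n) powr (2*H))))) = 2 * (2^n * exp (-(2 * (\<nu> + \<nu>s)^2 * E)))"
    using r by simp
  also have "\<dots> \<le> 2 * (exp (real n) * exp (-(real n + \<nu>s^2 * E / 4)))"
    using ge p2 by (intro mult_left_mono mult_mono) auto
  also have "\<dots> = 2 * exp (-(\<nu>s ^ 2) * (E / 4))" by (simp add: exp_add[symmetric])
  finally show ?thesis unfolding e4 .
qed

theorem theorem1:
  fixes M :: "'a measure" and X :: "real \<Rightarrow> 'a \<Rightarrow> real"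
    and H \<delta> \<nu> \<nu>s :: real and k :: nat
  assumes H: "0 < H" "H < 1"
    and fbm: "is_fbm M H X"
    and \<delta>: "0 < \<delta>" "\<delta> < H"
    and \<nu>: "\<nu> > 0" "\<nu>s > 0"
    and k: "k > K_nu \<delta> \<nu>"
  defines "lk \<equiv> 2 powr (-(H - \<delta>) * real k)"
    and "\<rho> \<equiv> 2 * (\<nu> + \<nu>s)"
  shows "measure M {\<omega> \<in> space M.
            sup_norm01 (\<lambda>t. dyadic_interp X k \<omega> t - dyadic_interp X (k - 1) \<omega> t) \<ge> \<rho> * lk}
         = measure M {\<omega> \<in> space M.
            (MAX j\<in>{0..<2 ^ (k - 1)}.
               \<bar>X (real (2 * j + 1) / 2 ^ k) \<omega>
                 - (X (real j / 2 ^ (k - 1)) \<omega> + X (real (j + 1) / 2 ^ (k - 1)) \<omega>) / 2\<bar>) \<ge> \<rho> * lk}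
       \<and> measure M {\<omega> \<in> space M.
            (MAX j\<in>{0..<2 ^ (k - 1)}.
               \<bar>X (real (2 * j + 1) / 2 ^ k) \<omega>
                 - (X (real j / 2 ^ (k - 1)) \<omega> + X (real (j + 1) / 2 ^ (k - 1)) \<omega>) / 2\<bar>) \<ge> \<rho> * lk}
         \<le> 2 * exp (-(\<nu>s ^ 2) * 2 powr (2 * real k * \<delta> - 2))"
proof -
  have k1: "1 \<le> k" and KB: "4 * sqrt (real k) \<le> \<nu> * 2 powr (\<delta> * real k)"
    using K_bound[OF \<delta>(1) \<nu>(1) k] by auto
  obtain n where kn: "k = Suc n" using k1 by (cases k) auto
  have x0: "0 < \<rho> * lk" using \<nu> by (simp add: \<rho>_def lk_def)
  show ?thesis
    unfolding kn diff_Suc_1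
  proof
    show "measure M {\<omega> \<in> space M.
            sup_norm01 (\<lambda>t. dyadic_interp X (Suc n) \<omega> t - dyadic_interp X n \<omega> t) \<ge> \<rho> * lk}
         = measure M {\<omega> \<in> space M.
            (MAX j\<in>{0..<2 ^ n}.
               \<bar>X (real (2 * j + 1) / 2 ^ Suc n) \<omega>
                 - (X (real j / 2 ^ n) \<omega> + X (real (j + 1) / 2 ^ n) \<omega>) / 2\<bar>) \<ge> \<rho> * lk}"
      unfolding sup_eq_max ..
    have "measure M {\<omega> \<in> space M.
            (MAX j\<in>{0..<2 ^ n}.
               \<bar>X (real (2 * j + 1) / 2 ^ Suc n) \<omega>
                 - (X (real j / 2 ^ n) \<omega> + X (real (j + 1) / 2 ^ n) \<omega>) / 2\<bar>) \<ge> \<rho> * lk}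
        \<le> 2^n * (2 * exp (-((\<rho> * lk)^2)/(2*((1/2^Suc n) powr (2*H)))))"
      by (rule max_tail[OF fbm x0])
    also have "\<dots> \<le> 2 * exp (-(\<nu>s ^ 2) * 2 powr (2 * real (Suc n) * \<delta> - 2))"
      by (rule final_arith[OF \<nu> \<delta>(1) KB[unfolded kn]]) (simp add: \<rho>_def lk_def kn)
    finally show "measure M {\<omega> \<in> space M.
            (MAX j\<in>{0..<2 ^ n}.
               \<bar>X (real (2 * j + 1) / 2 ^ Suc n) \<omega>
                 - (X (real j / 2 ^ n) \<omega> + X (real (j + 1) / 2 ^ n) \<omega>) / 2\<bar>) \<ge> \<rho> * lk}
        \<le> 2 * exp (-(\<nu>s ^ 2) * 2 powr (2 * real (Suc n) * \<delta> - 2))" .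
  qed
qed

end
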